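(* Let $E$ be an $AL$-space and let $F$ be a reflexive Banach lattice. Then every order bounded sequentially $uaw$-compact operator $T\colon E\to F$ has a weakly compact modulus $|T|$.
   Context: A net $(x_\alpha)$ in a Banach lattice $G$ is $uaw$-convergent to $x$ if $|x_\alpha-x|\wedge u\to 0$ weakly for every $u\in G_+$. A bounded operator $T\colon X\to G$ from a Banach space into a Banach lattice is sequentially $uaw$-compact if for every bounded sequence $(x_n)$ in $X$, the sequence $(Tx_n)$ has a subsequence that is $uaw$-convergent in $G$. *)

theory Defs
  imports "HOL-Analysis.Analysis"
begin

definition labs :: "'a::{lattice, uminus} \<Rightarrow> 'a" where
  "labs x = sup x (- x)"

class banach_lattice = banach + ordered_real_vector + lattice +
  assumes lattice_norm: "sup x (- x) \<le> sup y (- y) \<Longrightarrow> norm x \<le> norm y"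

definition AL_space :: "'a::banach_lattice itself \<Rightarrow> bool" where
  "AL_space _ \<longleftrightarrow> (\<forall>x y::'a. 0 \<le> x \<longrightarrow> 0 \<le> y \<longrightarrow> norm (x + y) = norm x + norm y)"

definition reflexive :: "'a::real_normed_vector itself \<Rightarrow> bool" where
  "reflexive _ \<longleftrightarrow> (\<forall>\<phi> :: ('a \<Rightarrow>\<^sub>L real) \<Rightarrow>\<^sub>L real. \<exists>x::'a. \<forall>f. blinfun_apply \<phi> f = blinfun_apply f x)"

definition weak_top :: "'a::real_normed_vector topology" where
  "weak_top = topology_generated_by {blinfun_apply f -` U | f U. open (U::real set)}"

definition weakly_convergent :: "(nat \<Rightarrow> 'a::real_normed_vector) \<Rightarrow> 'a \<Rightarrow> bool" where
  "weakly_convergent x l \<longleftrightarrow> (\<forall>f :: 'a \<Rightarrow>\<^sub>L real. (\<lambda>n. blinfun_apply f (x n)) \<longlonglongrightarrow> blinfun_apply f l)"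

definition uaw_convergent :: "(nat \<Rightarrow> 'a::banach_lattice) \<Rightarrow> 'a \<Rightarrow> bool" where
  "uaw_convergent x l \<longleftrightarrow>
     (\<forall>u. 0 \<le> u \<longrightarrow> weakly_convergent (\<lambda>n. inf (labs (x n - l)) u) 0)"

definition seq_uaw_compact_op :: "('a::real_normed_vector \<Rightarrow>\<^sub>L 'b::banach_lattice) \<Rightarrow> bool" where
  "seq_uaw_compact_op T \<longleftrightarrow>
     (\<forall>x :: nat \<Rightarrow> 'a. bounded (range x) \<longrightarrow>
        (\<exists>r l. strict_mono r \<and> uaw_convergent (\<lambda>n. blinfun_apply T (x (r n))) l))"

definition order_bounded_set :: "'a::order set \<Rightarrow> bool" where
  "order_bounded_set S \<longleftrightarrow> (\<exists>a b. S \<subseteq> {a..b})"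

definition order_bounded_op :: "('a::banach_lattice \<Rightarrow>\<^sub>L 'b::banach_lattice) \<Rightarrow> bool" where
  "order_bounded_op T \<longleftrightarrow>
     (\<forall>S. order_bounded_set S \<longrightarrow> order_bounded_set (blinfun_apply T ` S))"

definition op_le :: "('a::banach_lattice \<Rightarrow>\<^sub>L 'b::banach_lattice) \<Rightarrow> ('a \<Rightarrow>\<^sub>L 'b) \<Rightarrow> bool" where
  "op_le R S \<longleftrightarrow> (\<forall>x. 0 \<le> x \<longrightarrow> blinfun_apply R x \<le> blinfun_apply S x)"

definition is_modulus :: "('a::banach_lattice \<Rightarrow>\<^sub>L 'b::banach_lattice) \<Rightarrow> ('a \<Rightarrow>\<^sub>L 'b) \<Rightarrow> bool" where
  "is_modulus T S \<longleftrightarrow> order_bounded_op S \<and> op_le T S \<and> op_le (- T) S \<and>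
     (\<forall>R. order_bounded_op R \<longrightarrow> op_le T R \<longrightarrow> op_le (- T) R \<longrightarrow> op_le S R)"

definition weakly_compact_op :: "('a::real_normed_vector \<Rightarrow>\<^sub>L 'b::real_normed_vector) \<Rightarrow> bool" where
  "weakly_compact_op T \<longleftrightarrow>
     compactin weak_top (weak_top closure_of (blinfun_apply T ` cball 0 1))"

end

theory Submission
  imports Defs "HOL-Library.Lattice_Algebras"
begin

definition hb_ok :: "('a::real_vector \<Rightarrow> real) \<Rightarrow> 'a \<Rightarrow> ('a \<times> real) set \<Rightarrow> bool" where
  "hb_ok p w G \<longleftrightarrow> (0,0) \<in> G \<and> (\<forall>x a y b. (x,a) \<in> G \<longrightarrow> (y,b) \<in> G \<longrightarrow> (x+y,a+b) \<in> G)
     \<and> (\<forall>x a c. (x,a) \<in> G \<longrightarrow> (c *\<^sub>R x, c * a) \<in> G)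
     \<and> (\<forall>c. (0,c) \<in> G \<longrightarrow> c = 0) \<and> (\<forall>x a. (x,a) \<in> G \<longrightarrow> a \<le> p x) \<and> (w, p w) \<in> G"

lemma hb_functional:
  assumes "hb_ok p w G" "(x,a) \<in> G" "(x,b) \<in> G" shows "a = b"
proof -
  have "(x + (-1) *\<^sub>R x, a + (-1) * b) \<in> G" using assms unfolding hb_ok_def by blast
  hence "(0, a - b) \<in> G" by simp
  thus ?thesis using assms unfolding hb_ok_def by force
qed

lemma hb_extend:
  fixes p :: "'a::real_vector \<Rightarrow> real"
  assumes sub: "\<And>x y. p (x + y) \<le> p x + p y"
    and hom: "\<And>c x. c > 0 \<Longrightarrow> p (c *\<^sub>R x) = c * p x"
    and G: "hb_ok p w G" and x0: "\<forall>a. (x0,a) \<notin> G"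
  shows "\<exists>G'. hb_ok p w G' \<and> G \<subseteq> G' \<and> G' \<noteq> G"
proof -
  have Gadd: "\<And>x a y b. (x,a) \<in> G \<Longrightarrow> (y,b) \<in> G \<Longrightarrow> (x+y,a+b) \<in> G"
    and Gsc: "\<And>x a c. (x,a) \<in> G \<Longrightarrow> (c *\<^sub>R x, c * a) \<in> G"
    and Gb: "\<And>x a. (x,a) \<in> G \<Longrightarrow> a \<le> p x" and G0: "(0,0) \<in> G"
    and Gz: "\<And>c. (0,c) \<in> G \<Longrightarrow> c = 0" and Gw: "(w, p w) \<in> G"
    using G unfolding hb_ok_def by blast+
  define L where "L = {b - p (y - x0) | y b. (y,b) \<in> G}"
  have key: "b1 - p (y1 - x0) \<le> p (y2 + x0) - b2" if "(y1,b1) \<in> G" "(y2,b2) \<in> G" for y1 b1 y2 b2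
  proof -
    have "b1 + b2 \<le> p (y1 + y2)" using Gb[OF Gadd[OF that]] .
    also have "y1 + y2 = (y1 - x0) + (y2 + x0)" by simp
    also have "p \<dots> \<le> p (y1 - x0) + p (y2 + x0)" by (rule sub)
    finally show ?thesis by simp
  qed
  have Lne: "L \<noteq> {}" using G0 unfolding L_def by blast
  have Lbdd: "bdd_above L" unfolding L_def bdd_above_def using key G0 by blast
  define c where "c = Sup L"
  have c1: "b - p (y - x0) \<le> c" if "(y,b) \<in> G" for y b
    unfolding c_def by (rule cSup_upper) (use that Lbdd L_def in auto)
  have c2: "c \<le> p (y + x0) - b" if "(y,b) \<in> G" for y b
    unfolding c_def by (rule cSup_least) (use that Lne L_def key in auto)
  define G' where "G' = {(y + t *\<^sub>R x0, b + t * c) | y b t. (y,b) \<in> G}"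
  have sub1: "G \<subseteq> G'"
  proof
    fix z assume "z \<in> G"
    then obtain y b where "z = (y,b)" "(y,b) \<in> G" by (cases z) auto
    moreover have "z = (y + 0 *\<^sub>R x0, b + 0 * c)" using \<open>z = (y,b)\<close> by simp
    ultimately show "z \<in> G'" unfolding G'_def by blast
  qed
  have "(x0, c) = (0 + 1 *\<^sub>R x0, 0 + 1 * c)" by simp
  hence "(x0, c) \<in> G'" unfolding G'_def using G0 by blast
  hence neq: "G' \<noteq> G" using x0 by blast
  have ok: "hb_ok p w G'"
    unfolding hb_ok_def
  proof (intro conjI allI impI)
    show "(0,0) \<in> G'" using sub1 G0 by blast
    show "(w, p w) \<in> G'" using sub1 Gw by blast
  next
    fix x a y b assume "(x,a) \<in> G'" "(y,b) \<in> G'"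
    then obtain y1 b1 t1 y2 b2 t2 where "(y1,b1) \<in> G" "(y2,b2) \<in> G"
      "x = y1 + t1 *\<^sub>R x0" "a = b1 + t1 * c" "y = y2 + t2 *\<^sub>R x0" "b = b2 + t2 * c"
      unfolding G'_def by blast
    moreover have "(x+y, a+b) = ((y1+y2) + (t1+t2) *\<^sub>R x0, (b1+b2) + (t1+t2) * c)"
      using calculation by (simp add: algebra_simps)
    ultimately show "(x+y, a+b) \<in> G'" unfolding G'_def using Gadd by blast
  next
    fix x a d assume "(x,a) \<in> G'"
    then obtain y1 b1 t1 where "(y1,b1) \<in> G" "x = y1 + t1 *\<^sub>R x0" "a = b1 + t1 * c"
      unfolding G'_def by blast
    moreover have "(d *\<^sub>R x, d * a) = (d *\<^sub>R y1 + (d*t1) *\<^sub>R x0, (d*b1) + (d*t1) * c)"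
      using calculation by (simp add: algebra_simps)
    ultimately show "(d *\<^sub>R x, d * a) \<in> G'" unfolding G'_def using Gsc by blast
  next
    fix d assume "(0,d) \<in> G'"
    then obtain y1 b1 t1 where yb: "(y1,b1) \<in> G" and e: "0 = y1 + t1 *\<^sub>R x0" and d: "d = b1 + t1 * c"
      unfolding G'_def by blast
    show "d = 0"
    proof (cases "t1 = 0")
      case True thus ?thesis using e d Gz yb by simp
    next
      case False
      have "x0 = (- 1 / t1) *\<^sub>R y1" using e False
        by (metis (no_types, lifting) add_eq_0_iff divide_inverse_commute inverse_eq_divide
            mult_minus_left nonzero_mult_div_cancel_left scaleR_minus_left scaleR_scaleR scaleR_one)
      hence "(x0, (- 1 / t1) * b1) \<in> G" using Gsc[OF yb, of "-1/t1"] by metis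
      thus ?thesis using x0 by blast
    qed
  next
    fix x a assume "(x,a) \<in> G'"
    then obtain y b t where yb: "(y,b) \<in> G" and x: "x = y + t *\<^sub>R x0" and a: "a = b + t * c"
      unfolding G'_def by blast
    show "a \<le> p x"
    proof (cases t "0::real" rule: linorder_cases)
      case equal thus ?thesis using Gb yb x a by simp
    next
      case greater
      have "((1/t) *\<^sub>R y, (1/t) * b) \<in> G" using Gsc[OF yb] .
      from c2[OF this] have "c \<le> p ((1/t) *\<^sub>R y + x0) - (1/t) * b" .
      from mult_left_mono[OF this, of t] greater
      have "t * c \<le> t * (p ((1/t) *\<^sub>R y + x0) - (1/t) * b)" by simp
      also have "\<dots> = t * p ((1/t) *\<^sub>R y + x0) - b" using greater by (simp add: right_diff_distrib)
      finally have "t * c \<le> t * p ((1/t) *\<^sub>R y + x0) - b" .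
      also have "t * p ((1/t) *\<^sub>R y + x0) = p (t *\<^sub>R ((1/t) *\<^sub>R y + x0))" using hom greater by simp
      also have "t *\<^sub>R ((1/t) *\<^sub>R y + x0) = x" using greater x by (simp add: scaleR_add_right)
      finally show ?thesis using a by simp
    next
      case less
      define s where "s = - t"
      have s: "s > 0" using less s_def by simp
      have "((1/s) *\<^sub>R y, (1/s) * b) \<in> G" using Gsc[OF yb] .
      from c1[OF this] have "(1/s) * b - p ((1/s) *\<^sub>R y - x0) \<le> c" .
      from mult_left_mono[OF this, of s] s
      have "s * ((1/s) * b - p ((1/s) *\<^sub>R y - x0)) \<le> s * c" by simp
      moreover have "s * ((1/s) * b - p ((1/s) *\<^sub>R y - x0)) = b - s * p ((1/s) *\<^sub>R y - x0)"
        using s by (simp add: right_diff_distrib)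
      ultimately have "b - s * p ((1/s) *\<^sub>R y - x0) \<le> s * c" by simp
      also have "s * p ((1/s) *\<^sub>R y - x0) = p (s *\<^sub>R ((1/s) *\<^sub>R y - x0))" using hom s by simp
      also have "s *\<^sub>R ((1/s) *\<^sub>R y - x0) = x" using s x s_def by (simp add: scaleR_diff_right)
      finally show ?thesis using a s_def by simp
    qed
  qed
  show ?thesis using ok sub1 neq by blast
qed

lemma hb_chain_union:
  assumes C: "C \<in> chains {G. hb_ok p w G}" and ne: "C \<noteq> {}"
  shows "hb_ok p w (\<Union>C)"
proof -
  have CA: "\<And>G. G \<in> C \<Longrightarrow> hb_ok p w G" using C unfolding chains_def by blast
  have ch: "\<And>G H. G \<in> C \<Longrightarrow> H \<in> C \<Longrightarrow> G \<subseteq> H \<or> H \<subseteq> G"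
    using C unfolding chains_def chain_subset_def by blast
  obtain G0 where G0: "G0 \<in> C" using ne by blast
  show ?thesis unfolding hb_ok_def
  proof (intro conjI allI impI)
    show "(0,0) \<in> \<Union>C" using G0 CA unfolding hb_ok_def by blast
    show "(w, p w) \<in> \<Union>C" using G0 CA unfolding hb_ok_def by blast
  next
    fix x a y b assume "(x,a) \<in> \<Union>C" "(y,b) \<in> \<Union>C"
    then obtain G H where GH: "G \<in> C" "H \<in> C" "(x,a) \<in> G" "(y,b) \<in> H" by blast
    from ch[OF GH(1,2)] show "(x+y,a+b) \<in> \<Union>C"
    proof
      assume "G \<subseteq> H" thus ?thesis using GH CA[OF GH(2)] unfolding hb_ok_def by blast
    next
      assume "H \<subseteq> G" thus ?thesis using GH CA[OF GH(1)] unfolding hb_ok_def by blast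
    qed
  next
    fix x a c assume "(x,a) \<in> \<Union>C"
    then obtain G where "G \<in> C" "(x,a) \<in> G" by blast
    thus "(c *\<^sub>R x, c * a) \<in> \<Union>C" using CA unfolding hb_ok_def by blast
  next
    fix c assume "(0,c) \<in> \<Union>C"
    then obtain G where "G \<in> C" "(0,c) \<in> G" by blast
    thus "c = 0" using CA unfolding hb_ok_def by blast
  next
    fix x a assume "(x,a) \<in> \<Union>C"
    then obtain G where "G \<in> C" "(x,a) \<in> G" by blast
    thus "a \<le> p x" using CA unfolding hb_ok_def by blast
  qed
qed

theorem hahn_banach_real:
  fixes p :: "'a::real_vector \<Rightarrow> real"
  assumes sub: "\<And>x y. p (x + y) \<le> p x + p y"
    and hom: "\<And>c x. c > 0 \<Longrightarrow> p (c *\<^sub>R x) = c * p x"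
  shows "\<exists>f. linear f \<and> (\<forall>x. f x \<le> p x) \<and> f w = p w"
proof -
  have p0: "p 0 = 0" using hom[of 2 0] by simp
  have pneg: "- p x \<le> p (- x)" for x using sub[of x "-x"] p0 by simp
  define G0 where "G0 = {(t *\<^sub>R w, t * p w) | t. True}"
  have G0ok: "hb_ok p w G0" unfolding hb_ok_def
  proof (intro conjI allI impI)
    show "(0,0) \<in> G0" unfolding G0_def by (rule CollectI, rule exI[of _ 0]) simp
    show "(w, p w) \<in> G0" unfolding G0_def by (rule CollectI, rule exI[of _ 1]) simp
  next
    fix x a y b assume "(x,a) \<in> G0" "(y,b) \<in> G0"
    then obtain s t where "x = s *\<^sub>R w" "a = s * p w" "y = t *\<^sub>R w" "b = t * p w" unfolding G0_def by blast
    thus "(x+y, a+b) \<in> G0" unfolding G0_def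
      by (intro CollectI exI[of _ "s+t"]) (simp add: algebra_simps)
  next
    fix x a c assume "(x,a) \<in> G0"
    then obtain s where "x = s *\<^sub>R w" "a = s * p w" unfolding G0_def by blast
    thus "(c *\<^sub>R x, c * a) \<in> G0" unfolding G0_def
      by (intro CollectI exI[of _ "c * s"]) (simp add: algebra_simps)
  next
    fix c assume "(0,c) \<in> G0"
    then obtain s where "0 = s *\<^sub>R w" "c = s * p w" unfolding G0_def by blast
    thus "c = 0" using p0 by auto
  next
    fix x a assume "(x,a) \<in> G0"
    then obtain s where x: "x = s *\<^sub>R w" and a: "a = s * p w" unfolding G0_def by blast
    show "a \<le> p x"
    proof (cases s "0::real" rule: linorder_cases)
      case less
      have "p x = (- s) * p (- w)" using hom[of "-s" "-w"] less x by simp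
      moreover have "(- s) * (- p w) \<le> (- s) * p (- w)" using pneg[of w] less by (intro mult_left_mono) auto
      ultimately show ?thesis using a by simp
    qed (use hom x a p0 in auto)
  qed
  have "\<exists>M\<in>{G. hb_ok p w G}. \<forall>X\<in>{G. hb_ok p w G}. M \<subseteq> X \<longrightarrow> X = M"
  proof (rule Zorn_Lemma2, intro ballI)
    fix C assume C: "C \<in> chains {G. hb_ok p w G}"
    show "\<exists>U\<in>{G. hb_ok p w G}. \<forall>X\<in>C. X \<subseteq> U"
    proof (cases "C = {}")
      case True thus ?thesis using G0ok by blast
    next
      case False thus ?thesis using hb_chain_union[OF C False] by blast
    qed
  qed
  then obtain M where M: "hb_ok p w M" and max: "\<And>X. hb_ok p w X \<Longrightarrow> M \<subseteq> X \<Longrightarrow> X = M" by blast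
  have tot: "\<exists>a. (x,a) \<in> M" for x
  proof (rule ccontr)
    assume "\<not> (\<exists>a. (x,a) \<in> M)"
    then obtain G' where "hb_ok p w G'" "M \<subseteq> G'" "G' \<noteq> M" using hb_extend[OF sub hom M] by blast
    thus False using max by blast
  qed
  define f where "f x = (THE a. (x,a) \<in> M)" for x
  have fM: "(x, f x) \<in> M" for x
  proof -
    obtain a where a: "(x,a) \<in> M" using tot by blast
    have "(THE a. (x,a) \<in> M) = a" proof (rule the_equality)
      show "(x,a) \<in> M" by (rule a)
      fix b assume "(x,b) \<in> M" thus "b = a" using hb_functional[OF M _ a] by blast
    qed
    thus ?thesis using a f_def by simp
  qed
  have Madd0: "\<And>x a y b. (x,a) \<in> M \<Longrightarrow> (y,b) \<in> M \<Longrightarrow> (x+y,a+b) \<in> M"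
    and Msc0: "\<And>x a c. (x,a) \<in> M \<Longrightarrow> (c *\<^sub>R x, c * a) \<in> M"
    and Mb: "\<And>x a. (x,a) \<in> M \<Longrightarrow> a \<le> p x" and Mw: "(w, p w) \<in> M"
    using M unfolding hb_ok_def by metis+
  have Madd: "(x+y, f x + f y) \<in> M" for x y using Madd0[OF fM fM] .
  have Msc: "(c *\<^sub>R x, c * f x) \<in> M" for c x using Msc0[OF fM] .
  have "linear f"
  proof (rule linearI)
    show "f (x + y) = f x + f y" for x y using hb_functional[OF M fM Madd] .
    show "f (c *\<^sub>R x) = c *\<^sub>R f x" for c x using hb_functional[OF M fM Msc] by simp
  qed
  moreover have "\<forall>x. f x \<le> p x" using Mb fM by blast
  moreover have "f w = p w" using hb_functional[OF M fM Mw] .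
  ultimately show ?thesis by blast
qed

context banach_lattice begin
subclass lattice_ab_group_add ..
end

lemma labs_nonneg: "0 \<le> labs (x::'a::banach_lattice)"
proof -
  have "x + - x \<le> labs x + labs x" unfolding labs_def by (intro add_mono) auto
  thus ?thesis by simp
qed

lemma labs_of_nonneg: "0 \<le> (x::'a::banach_lattice) \<Longrightarrow> labs x = x"
proof -
  assume "0 \<le> x" hence "- x \<le> x" using neg_le_0_iff_le order.trans by blast
  thus ?thesis unfolding labs_def by (rule sup_absorb1)
qed

lemma labs_of_nonpos: "(x::'a::banach_lattice) \<le> 0 \<Longrightarrow> labs x = - x"
proof -
  assume "x \<le> 0" hence "x \<le> - x" using neg_0_le_iff_le order.trans by blast
  thus ?thesis unfolding labs_def by (rule sup_absorb2)
qed

lemma norm_le_by_labs: "labs (x::'a::banach_lattice) \<le> labs y \<Longrightarrow> norm x \<le> norm y"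
  using lattice_norm unfolding labs_def by blast

lemma norm_labs: "norm (labs (x::'a::banach_lattice)) = norm x"
  by (intro antisym norm_le_by_labs) (simp_all add: labs_of_nonneg labs_nonneg)

lemma norm_mono_pos: "0 \<le> (a::'a::banach_lattice) \<Longrightarrow> a \<le> b \<Longrightarrow> norm a \<le> norm b"
  by (rule norm_le_by_labs) (simp add: labs_of_nonneg)

lemma norm_le_pos_bound: "labs (x::'a::banach_lattice) \<le> y \<Longrightarrow> norm x \<le> norm y"
  by (rule norm_le_by_labs) (metis labs_nonneg labs_of_nonneg order.trans)

lemma nprt_scale: "0 < c \<Longrightarrow> nprt (c *\<^sub>R (x::'a::banach_lattice)) = c *\<^sub>R nprt x"
proof -
  assume c: "0 < c"
  have "c *\<^sub>R inf x 0 \<le> c *\<^sub>R x" using c by (intro scaleR_left_mono) auto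
  moreover have "c *\<^sub>R inf x 0 \<le> c *\<^sub>R 0" using c by (intro scaleR_left_mono) auto
  ultimately have 1: "c *\<^sub>R nprt x \<le> nprt (c *\<^sub>R x)" unfolding nprt_def by simp
  have "(1/c) *\<^sub>R inf (c *\<^sub>R x) 0 \<le> (1/c) *\<^sub>R (c *\<^sub>R x)" using c by (intro scaleR_left_mono) auto
  moreover have "(1/c) *\<^sub>R inf (c *\<^sub>R x) 0 \<le> (1/c) *\<^sub>R 0" using c by (intro scaleR_left_mono) auto
  ultimately have "(1/c) *\<^sub>R nprt (c *\<^sub>R x) \<le> nprt x" unfolding nprt_def using c by simp
  hence "c *\<^sub>R ((1/c) *\<^sub>R nprt (c *\<^sub>R x)) \<le> c *\<^sub>R nprt x" using c by (intro scaleR_left_mono) auto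
  hence "nprt (c *\<^sub>R x) \<le> c *\<^sub>R nprt x" using c by simp
  thus ?thesis using 1 by (rule antisym)
qed

lemma nprt_add: "nprt x + nprt y \<le> nprt (x + (y::'a::banach_lattice))"
  unfolding nprt_def by (simp add: add_mono add_nonpos_nonpos)

lemma norm_nprt_sub: "norm (nprt (x + (y::'a::banach_lattice))) \<le> norm (nprt x) + norm (nprt y)"
proof -
  have "- nprt (x+y) \<le> - (nprt x + nprt y)" using nprt_add[of x y] by (simp only: neg_le_iff_le)
  hence "labs (nprt (x+y)) \<le> labs (nprt x + nprt y)"
    by (simp only: labs_of_nonpos add_nonpos_nonpos nprt_le_zero)
  hence "norm (nprt (x+y)) \<le> norm (nprt x + nprt y)" by (rule norm_le_by_labs)
  also have "\<dots> \<le> norm (nprt x) + norm (nprt y)" by (rule norm_triangle_ineq)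
  finally show ?thesis .
qed

lemma norm_nprt_le: "norm (nprt (x::'a::banach_lattice)) \<le> norm x"
proof (rule norm_le_by_labs)
  have "labs (nprt x) = sup (-x) 0" by (simp add: labs_of_nonpos pprt_neg[symmetric] pprt_def)
  also have "\<dots> \<le> labs x" using labs_nonneg[of x] unfolding labs_def by simp
  finally show "labs (nprt x) \<le> labs x" .
qed

lemma positive_separating_functional:
  fixes w :: "'a::banach_lattice"
  assumes "\<not> 0 \<le> w"
  shows "\<exists>g::'a \<Rightarrow>\<^sub>L real. (\<forall>x. 0 \<le> x \<longrightarrow> 0 \<le> g x) \<and> g w < 0"
proof -
  define p where "p x = norm (nprt x)" for x :: 'a
  obtain f where f: "linear f" "\<forall>x. f x \<le> p x" "f w = p w"
  proof -
    have "\<exists>f. linear f \<and> (\<forall>x. f x \<le> p x) \<and> f w = p w"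
    proof (rule hahn_banach_real)
      show "p (x + y) \<le> p x + p y" for x y unfolding p_def by (rule norm_nprt_sub)
      show "p (c *\<^sub>R x) = c * p x" if "0 < c" for c x
        unfolding p_def using that by (simp add: nprt_scale)
    qed
    thus ?thesis using that by blast
  qed
  have fb: "\<bar>f x\<bar> \<le> norm x" for x
  proof -
    have "f x \<le> norm x" using f(2)[rule_format, of x] norm_nprt_le[of x] unfolding p_def by linarith
    moreover have "f (-x) \<le> norm x" using f(2)[rule_format, of "-x"] norm_nprt_le[of "-x"]
      unfolding p_def by simp
    moreover have "f (-x) = - f x" using linear_neg[OF f(1)] .
    ultimately show ?thesis by linarith
  qed
  have bl: "bounded_linear f"
    using f(1) fb unfolding bounded_linear_def bounded_linear_axioms_def
    by (metis linear_iff mult.commute mult_1 real_norm_def)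
  define g where "g = - Blinfun f"
  have gf: "g x = - f x" for x unfolding g_def using bl by (simp add: uminus_blinfun.rep_eq bounded_linear_Blinfun_apply)
  have "nprt w \<noteq> 0" using assms zero_le_iff_zero_nprt by blast
  hence "p w > 0" unfolding p_def by simp
  moreover have "0 \<le> g x" if "0 \<le> x" for x
    using f(2)[rule_format, of x] that gf unfolding p_def by (simp add: nprt_eq_0)
  ultimately show ?thesis using gf f(3) by (intro exI[of _ g]) auto
qed

lemma functional_separation:
  fixes w :: "'a::banach_lattice"
  assumes "\<And>g::'a \<Rightarrow>\<^sub>L real. g w = 0" shows "w = 0"
proof -
  have "0 \<le> w" using positive_separating_functional[of w] assms by force
  moreover have "0 \<le> - w" using positive_separating_functional[of "-w"] assms
    by (metis blinfun.minus_right neg_0_less_iff_less neg_equal_0_iff_equal order_less_irrefl)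
  ultimately show ?thesis by simp
qed

lemma nonneg_iff_functionals:
  "0 \<le> (w::'a::banach_lattice) \<longleftrightarrow> (\<forall>g::'a \<Rightarrow>\<^sub>L real. (\<forall>x. 0 \<le> x \<longrightarrow> 0 \<le> g x) \<longrightarrow> 0 \<le> g w)"
  using positive_separating_functional[of w] by force

lemma topspace_weak_top [simp]: "topspace (weak_top :: 'a::real_normed_vector topology) = UNIV"
  unfolding weak_top_def topology_generated_by_topspace
proof -
  have "blinfun_apply (0::'a \<Rightarrow>\<^sub>L real) -` UNIV = UNIV" by simp
  have "UNIV \<in> {blinfun_apply f -` U |(f::'a \<Rightarrow>\<^sub>L real) U. open (U::real set)}"
    by (unfold mem_Collect_eq, rule exI[of _ "0::'a \<Rightarrow>\<^sub>L real"], rule exI[of _ "UNIV::real set"]) simp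
  hence "UNIV \<subseteq> \<Union> {blinfun_apply f -` U |(f::'a \<Rightarrow>\<^sub>L real) U. open (U::real set)}" by (rule Union_upper)
  thus "\<Union> {blinfun_apply f -` U |(f::'a \<Rightarrow>\<^sub>L real) U. open (U::real set)} = UNIV" by (rule top_le)
qed

lemma openin_weak_top_preimage:
  assumes "open U"
  shows "openin (weak_top :: 'a::real_normed_vector topology) (blinfun_apply (f::'a \<Rightarrow>\<^sub>L real) -` U)"
proof -
  have "blinfun_apply f -` U \<in> {blinfun_apply f -` U |(f::'a \<Rightarrow>\<^sub>L real) U. open (U::real set)}"
    by (unfold mem_Collect_eq, rule exI[of _ f], rule exI[of _ U]) (simp add: assms)
  thus ?thesis unfolding weak_top_def by (rule topology_generated_by_Basis)
qed

lemma closedin_weak_top_preimage: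
  assumes "closed C"
  shows "closedin (weak_top :: 'a::real_normed_vector topology) (blinfun_apply (f::'a \<Rightarrow>\<^sub>L real) -` C)"
proof -
  have "UNIV - blinfun_apply f -` C = blinfun_apply f -` (- C)" by auto
  thus ?thesis unfolding closedin_def using openin_weak_top_preimage[of "-C" f] assms
    by (simp add: open_Compl)
qed

lemma closedin_weak_INT:
  assumes "I \<noteq> {}" "\<And>i. i \<in> I \<Longrightarrow> closed (C i)"
  shows "closedin (weak_top :: 'a::real_normed_vector topology) (\<Inter>i\<in>I. blinfun_apply (f i :: 'a \<Rightarrow>\<^sub>L real) -` C i)"
proof (rule closedin_Inter)
  show "(\<lambda>i. blinfun_apply (f i) -` C i) ` I \<noteq> {}" using assms by simp
  show "\<And>K. K \<in> (\<lambda>i. blinfun_apply (f i) -` C i) ` I \<Longrightarrow> closedin weak_top K"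
    using assms closedin_weak_top_preimage by blast
qed

lemma closedin_weak_ge:
  "closedin (weak_top :: 'a::banach_lattice topology) {x. z \<le> x}"
proof -
  define G where "G = {g::'a \<Rightarrow>\<^sub>L real. \<forall>x. 0 \<le> x \<longrightarrow> 0 \<le> g x}"
  have "{x. z \<le> x} = (\<Inter>g\<in>G. blinfun_apply g -` {g z..})"
  proof (intro set_eqI iffI)
    fix x assume "x \<in> {x. z \<le> x}"
    hence xz: "0 \<le> x - z" by simp
    show "x \<in> (\<Inter>g\<in>G. blinfun_apply g -` {g z..})"
    proof
      fix g assume "g \<in> G"
      hence "0 \<le> g (x - z)" using xz unfolding G_def by blast
      thus "x \<in> blinfun_apply g -` {g z..}" by (simp add: blinfun.diff_right)
    qed
  next
    fix x assume "x \<in> (\<Inter>g\<in>G. blinfun_apply g -` {g z..})"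
    hence "\<forall>g::'a \<Rightarrow>\<^sub>L real. (\<forall>x. 0 \<le> x \<longrightarrow> 0 \<le> g x) \<longrightarrow> 0 \<le> g (x - z)"
      unfolding G_def by (auto simp: blinfun.diff_right)
    hence "0 \<le> x - z" using nonneg_iff_functionals by blast
    thus "x \<in> {x. z \<le> x}" by simp
  qed
  moreover have "0 \<in> G" unfolding G_def by simp
  moreover have "closedin weak_top (\<Inter>g\<in>G. blinfun_apply g -` {g z..})"
    by (rule closedin_weak_INT) (use \<open>0 \<in> G\<close> in auto)
  ultimately show ?thesis by simp
qed

lemma closedin_weak_le:
  "closedin (weak_top :: 'a::banach_lattice topology) {x. x \<le> z}"
proof -
  define G where "G = {g::'a \<Rightarrow>\<^sub>L real. \<forall>x. 0 \<le> x \<longrightarrow> 0 \<le> g x}"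
  have "{x. x \<le> z} = (\<Inter>g\<in>G. blinfun_apply g -` {..g z})"
  proof (intro set_eqI iffI)
    fix x assume "x \<in> {x. x \<le> z}"
    hence xz: "0 \<le> z - x" by simp
    show "x \<in> (\<Inter>g\<in>G. blinfun_apply g -` {..g z})"
    proof
      fix g assume "g \<in> G"
      hence "0 \<le> g (z - x)" using xz unfolding G_def by blast
      thus "x \<in> blinfun_apply g -` {..g z}" by (simp add: blinfun.diff_right)
    qed
  next
    fix x assume "x \<in> (\<Inter>g\<in>G. blinfun_apply g -` {..g z})"
    hence "\<forall>g::'a \<Rightarrow>\<^sub>L real. (\<forall>x. 0 \<le> x \<longrightarrow> 0 \<le> g x) \<longrightarrow> 0 \<le> g (z - x)"
      unfolding G_def by (auto simp: blinfun.diff_right)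
    hence "0 \<le> z - x" using nonneg_iff_functionals by blast
    thus "x \<in> {x. x \<le> z}" by simp
  qed
  moreover have "0 \<in> G" unfolding G_def by simp
  moreover have "closedin weak_top (\<Inter>g\<in>G. blinfun_apply g -` {..g z})"
    by (rule closedin_weak_INT) (use \<open>0 \<in> G\<close> in auto)
  ultimately show ?thesis by simp
qed

definition Kset :: "real \<Rightarrow> 'a::real_normed_vector set" where
  "Kset r = {x. \<forall>f::'a \<Rightarrow>\<^sub>L real. \<bar>blinfun_apply f x\<bar> \<le> r * norm f}"

lemma closedin_Kset: "closedin weak_top (Kset r :: 'a::real_normed_vector set)"
proof -
  have "Kset r = (\<Inter>f\<in>(UNIV::('a \<Rightarrow>\<^sub>L real) set). blinfun_apply f -` {-(r * norm f)..r * norm f})"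
  proof -
    have e: "(\<bar>a\<bar> \<le> b) = (a \<in> {-b..b})" for a b :: real by auto
    show ?thesis unfolding Kset_def by (rule set_eqI) (simp only: mem_Collect_eq INT_iff vimage_eq e ball_UNIV)
  qed
  moreover have "closedin weak_top (\<Inter>f\<in>(UNIV::('a \<Rightarrow>\<^sub>L real) set). blinfun_apply f -` {-(r * norm f)..r * norm f})"
    by (rule closedin_weak_INT) auto
  ultimately show ?thesis by simp
qed

lemma norm_le_Kset: "norm x \<le> r \<Longrightarrow> x \<in> Kset r"
  unfolding Kset_def
proof (intro CollectI allI)
  fix f :: "'a \<Rightarrow>\<^sub>L real" assume "norm x \<le> r"
  have "\<bar>f x\<bar> \<le> norm f * norm x" using norm_blinfun[of f x] by simp
  also have "\<dots> \<le> norm f * r" using \<open>norm x \<le> r\<close> by (intro mult_left_mono) auto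
  finally show "\<bar>f x\<bar> \<le> r * norm f" by (simp only: mult.commute)
qed

lemma weak_basis_Union:
  "\<Union> {blinfun_apply f -` U |(f::'a::real_normed_vector \<Rightarrow>\<^sub>L real) U. open (U::real set)} = UNIV"
  using topspace_weak_top[where 'a='a] unfolding weak_top_def topology_generated_by_topspace .

lemma compactin_Kset:
  assumes refl: "reflexive TYPE('a::banach_lattice)" and r: "0 \<le> r"
  shows "compactin weak_top (Kset r :: 'a set)"
proof -
  define X where "X = product_topology (\<lambda>_::('a \<Rightarrow>\<^sub>L real). euclideanreal) UNIV"
  have topX: "topspace X = UNIV" unfolding X_def by simp
  have proj: "continuous_map X euclideanreal (\<lambda>\<phi>. \<phi> f)" for f
    unfolding X_def by (rule continuous_map_product_projection) simp
  define B where "B f = {-(r * norm f)..r * norm f}" for f :: "'a \<Rightarrow>\<^sub>L real"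
  define P0 where "P0 = PiE UNIV B"
  have cP0: "compactin X P0" unfolding X_def P0_def B_def by (simp add: compactin_PiE)
  define A where "A = (\<Inter>fg\<in>(UNIV::(('a \<Rightarrow>\<^sub>L real) \<times> ('a \<Rightarrow>\<^sub>L real)) set).
      {\<phi> \<in> topspace X. \<phi> (fst fg + snd fg) - \<phi> (fst fg) - \<phi> (snd fg) \<in> {0}})"
  define S where "S = (\<Inter>cf\<in>(UNIV::(real \<times> ('a \<Rightarrow>\<^sub>L real)) set).
      {\<phi> \<in> topspace X. \<phi> (fst cf *\<^sub>R snd cf) - fst cf * \<phi> (snd cf) \<in> {0}})"
  have cA: "closedin X A" unfolding A_def
    by (rule closedin_Inter, simp, clarify, rule closedin_continuous_map_preimage)
       (auto intro!: continuous_map_diff proj)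
  have cS: "closedin X S" unfolding S_def
    by (rule closedin_Inter, simp, clarify, rule closedin_continuous_map_preimage)
       (auto intro!: continuous_map_diff continuous_map_real_mult_left proj)
  define P where "P = (A \<inter> S) \<inter> P0"
  have cP: "compactin X P" unfolding P_def by (rule closed_Int_compactin) (use cA cS cP0 in auto)
  have Pchar: "\<phi> \<in> P \<longleftrightarrow> (\<forall>f. \<bar>\<phi> f\<bar> \<le> r * norm f) \<and> (\<forall>f g. \<phi> (f + g) = \<phi> f + \<phi> g)
      \<and> (\<forall>c f. \<phi> (c *\<^sub>R f) = c * \<phi> f)" for \<phi>
  proof -
    have 1: "\<phi> \<in> A \<longleftrightarrow> (\<forall>f g. \<phi> (f + g) = \<phi> f + \<phi> g)"
      unfolding A_def topX by (simp add: split_paired_All algebra_simps)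
    have 2: "\<phi> \<in> S \<longleftrightarrow> (\<forall>c f. \<phi> (c *\<^sub>R f) = c * \<phi> f)"
      unfolding S_def topX by (simp add: split_paired_All)
    have 3: "\<phi> \<in> P0 \<longleftrightarrow> (\<forall>f. \<bar>\<phi> f\<bar> \<le> r * norm f)"
      unfolding P0_def B_def PiE_UNIV_domain Pi_iff by (simp add: abs_le_iff conj_commute minus_le_iff)
    show ?thesis unfolding P_def using 1 2 3 by blast
  qed
  define \<Psi> where "\<Psi> \<phi> = (SOME x::'a. \<forall>f::'a \<Rightarrow>\<^sub>L real. \<phi> f = blinfun_apply f x)" for \<phi> :: "('a \<Rightarrow>\<^sub>L real) \<Rightarrow> real"
  have \<Psi>: "\<phi> f = blinfun_apply f (\<Psi> \<phi>)" if "\<phi> \<in> P" for \<phi> f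
  proof -
    have bl: "bounded_linear \<phi>"
    proof
      show "\<phi> (f + g) = \<phi> f + \<phi> g" for f g using that Pchar by blast
      show "\<phi> (c *\<^sub>R f) = c *\<^sub>R \<phi> f" for c f using that Pchar by simp
      show "\<exists>K. \<forall>f. norm (\<phi> f) \<le> norm f * K"
        using that Pchar by (intro exI[of _ r]) (simp add: mult.commute)
    qed
    obtain x where x: "\<forall>f. blinfun_apply (Blinfun \<phi>) f = blinfun_apply f x"
      using refl unfolding reflexive_def by blast
    hence "\<forall>f. \<phi> f = blinfun_apply f x" using bl by (simp add: bounded_linear_Blinfun_apply)
    hence "\<forall>f. \<phi> f = blinfun_apply f (\<Psi> \<phi>)" unfolding \<Psi>_def by (rule someI)
    thus ?thesis by blast
  qed
  have cont: "continuous_map (subtopology X P) weak_top \<Psi>"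
    unfolding weak_top_def
  proof (rule continuous_on_generated_topo)
    show "\<Psi> ` topspace (subtopology X P) \<subseteq> \<Union> {blinfun_apply f -` U |(f::'a \<Rightarrow>\<^sub>L real) U. open (U::real set)}"
      using weak_basis_Union[where 'a='a] by simp
  next
    fix U assume "U \<in> {blinfun_apply f -` U |(f::'a \<Rightarrow>\<^sub>L real) U. open (U::real set)}"
    then obtain f V where U: "U = blinfun_apply f -` V" and V: "open (V::real set)" by blast
    have "\<Psi> -` U \<inter> topspace (subtopology X P) = {\<phi> \<in> topspace X. \<phi> f \<in> V} \<inter> P"
      using \<Psi> U topX by auto
    moreover have "openin X {\<phi> \<in> topspace X. \<phi> f \<in> V}"
      by (rule openin_continuous_map_preimage[OF proj]) (simp add: V)
    ultimately show "openin (subtopology X P) (\<Psi> -` U \<inter> topspace (subtopology X P))"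
      unfolding openin_subtopology by blast
  qed
  have "compactin weak_top (\<Psi> ` P)"
    by (rule image_compactin[OF _ cont]) (simp add: compactin_subtopology cP)
  moreover have "\<Psi> ` P = Kset r"
  proof
    show "\<Psi> ` P \<subseteq> Kset r" unfolding Kset_def using \<Psi> Pchar by fastforce
  next
    show "Kset r \<subseteq> \<Psi> ` P"
    proof
      fix x :: 'a assume x: "x \<in> Kset r"
      define \<phi> where "\<phi> f = blinfun_apply f x" for f :: "'a \<Rightarrow>\<^sub>L real"
      have "\<phi> \<in> P" unfolding Pchar \<phi>_def using x unfolding Kset_def
        by (auto simp: blinfun.add_left blinfun.scaleR_left)
      moreover have "\<Psi> \<phi> = x"
      proof -
        have "blinfun_apply g (\<Psi> \<phi> - x) = 0" for g :: "'a \<Rightarrow>\<^sub>L real"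
          using \<Psi>[OF \<open>\<phi> \<in> P\<close>, of g] unfolding \<phi>_def by (simp add: blinfun.diff_right)
        hence "\<Psi> \<phi> - x = 0" by (rule functional_separation)
        thus ?thesis by simp
      qed
      ultimately show "x \<in> \<Psi> ` P" by (metis image_eqI)
    qed
  qed
  ultimately show ?thesis by simp
qed

lemma norm_between: "(a::'a::banach_lattice) \<le> d \<Longrightarrow> d \<le> b \<Longrightarrow> norm d \<le> norm a + norm b"
proof -
  assume ad: "a \<le> d" and db: "d \<le> b"
  have "d \<le> labs a + labs b"
  proof -
    have "d \<le> labs b" using db unfolding labs_def by (meson order.trans sup_ge1)
    thus ?thesis using labs_nonneg[of a] by (metis add_increasing)
  qed
  moreover have "- d \<le> labs a + labs b"
  proof -
    have "- d \<le> - a" using ad by simp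
    also have "- a \<le> labs a" unfolding labs_def by simp
    finally show ?thesis using labs_nonneg[of b] by (metis add_increasing2)
  qed
  ultimately have "labs d \<le> labs a + labs b" unfolding labs_def by simp
  hence "norm d \<le> norm (labs a + labs b)" by (rule norm_le_pos_bound)
  also have "\<dots> \<le> norm (labs a) + norm (labs b)" by (rule norm_triangle_ineq)
  finally show ?thesis by (simp add: norm_labs)
qed

lemma reflexive_has_lub:
  assumes refl: "reflexive TYPE('a::banach_lattice)" and ne: "A \<noteq> {}" and ub: "\<forall>a\<in>A. a \<le> (b::'a)"
  shows "\<exists>s. (\<forall>a\<in>A. a \<le> s) \<and> (\<forall>c. (\<forall>a\<in>A. a \<le> c) \<longrightarrow> s \<le> c)"
proof -
  obtain a0 where a0: "a0 \<in> A" using ne by blast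
  define UB where "UB = {c. \<forall>a\<in>A. a \<le> c}"
  have bUB: "b \<in> UB" using ub UB_def by blast
  have finsup: "finite F \<Longrightarrow> F \<subseteq> A \<Longrightarrow> \<exists>d. (\<forall>a\<in>F. a \<le> d) \<and> a0 \<le> d \<and> (\<forall>c\<in>UB. d \<le> c)" for F
  proof (induction F rule: finite_induct)
    case empty thus ?case using a0 UB_def by auto
  next
    case (insert a F)
    then obtain d where d: "\<forall>a\<in>F. a \<le> d" "a0 \<le> d" "\<forall>c\<in>UB. d \<le> c" by blast
    have "a \<in> A" using insert by blast
    show ?case
      by (rule exI[of _ "sup a d"])
         (use d \<open>a \<in> A\<close> UB_def in \<open>auto intro: le_supI2\<close>)
  qed
  define W where "W a = {d. a \<le> d \<and> a0 \<le> d \<and> (\<forall>c\<in>UB. d \<le> c)}" for a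
  define r where "r = norm a0 + norm b"
  have r0: "0 \<le> r" unfolding r_def by simp
  have WK: "W a \<subseteq> Kset r" for a
  proof
    fix d assume "d \<in> W a"
    hence "a0 \<le> d" "d \<le> b" using bUB unfolding W_def by auto
    thus "d \<in> Kset r" unfolding r_def by (intro norm_le_Kset norm_between)
  qed
  have cK: "compactin weak_top (Kset r :: 'a set)" by (rule compactin_Kset[OF refl r0])
  define U where "U = (\<lambda>a. weak_top closure_of W a) ` A"
  have "Kset r \<inter> \<Inter>U \<noteq> {}"
  proof -
    have "(Kset r :: 'a set) \<subseteq> topspace weak_top \<and> (\<forall>\<U>::'a set set. (\<forall>C\<in>\<U>. closedin weak_top C) \<and> (\<forall>\<F>. finite \<F> \<and> \<F> \<subseteq> \<U> \<longrightarrow> Kset r \<inter> \<Inter>\<F> \<noteq> {})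
        \<longrightarrow> Kset r \<inter> \<Inter>\<U> \<noteq> {})"
      using cK by (simp add: compactin_fip)
    hence fip: "\<And>\<U>::'a set set. (\<forall>C::'a set\<in>\<U>. closedin weak_top C) \<Longrightarrow> (\<forall>\<F>. finite \<F> \<and> \<F> \<subseteq> \<U> \<longrightarrow> Kset r \<inter> \<Inter>\<F> \<noteq> {})
        \<Longrightarrow> Kset r \<inter> \<Inter>\<U> \<noteq> {}" by blast
    moreover have "\<forall>C\<in>U. closedin weak_top C" unfolding U_def by auto
    moreover have "Kset r \<inter> \<Inter>\<F> \<noteq> {}" if fin: "finite \<F>" and sub: "\<F> \<subseteq> U" for \<F>
    proof -
      obtain F where F: "F \<subseteq> A" "finite F" "\<F> = (\<lambda>a. weak_top closure_of W a) ` F"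
        using finite_subset_image[OF fin sub[unfolded U_def]] by blast
      obtain d where d: "\<forall>a\<in>F. a \<le> d" "a0 \<le> d" "\<forall>c\<in>UB. d \<le> c" using finsup[OF F(2,1)] by blast
      have "d \<in> W a" if "a \<in> F" for a using d that unfolding W_def by blast
      hence "d \<in> weak_top closure_of W a" if "a \<in> F" for a
        using that closure_of_subset[of "W a" weak_top] by auto
      hence "d \<in> \<Inter>\<F>" using F(3) by blast
      moreover have "d \<in> Kset r" using WK[of a0] d unfolding W_def by blast
      ultimately show ?thesis by blast
    qed
    ultimately show ?thesis using fip[of U] by blast
  qed
  then obtain z where z: "z \<in> Kset r" "z \<in> \<Inter>U" by blast
  have zcl: "z \<in> weak_top closure_of W a" if "a \<in> A" for a using z(2) that unfolding U_def by blast
  have "a \<le> z" if "a \<in> A" for a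
  proof -
    have "weak_top closure_of W a \<subseteq> {x. a \<le> x}"
      by (rule closure_of_minimal) (auto simp: closedin_weak_ge W_def)
    thus ?thesis using zcl[OF that] by blast
  qed
  moreover have "z \<le> c" if "\<forall>a\<in>A. a \<le> c" for c
  proof -
    have "c \<in> UB" using that UB_def by blast
    hence "weak_top closure_of W a0 \<subseteq> {x. x \<le> c}"
      by (intro closure_of_minimal) (auto simp: closedin_weak_le W_def)
    thus ?thesis using zcl[OF a0] by blast
  qed
  ultimately show ?thesis by blast
qed

lemma closed_ge: "closed {x::'a::banach_lattice. z \<le> x}"
proof -
  define G where "G = {g::'a \<Rightarrow>\<^sub>L real. \<forall>x. 0 \<le> x \<longrightarrow> 0 \<le> g x}"
  have "{x. z \<le> x} = (\<Inter>g\<in>G. {x. blinfun_apply g z \<le> blinfun_apply g x})"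
  proof (intro set_eqI iffI)
    fix x assume "x \<in> {x. z \<le> x}"
    hence xz: "0 \<le> x - z" by simp
    show "x \<in> (\<Inter>g\<in>G. {x. blinfun_apply g z \<le> blinfun_apply g x})"
    proof
      fix g assume "g \<in> G"
      hence "0 \<le> g (x - z)" using xz unfolding G_def by blast
      thus "x \<in> {x. blinfun_apply g z \<le> blinfun_apply g x}" by (simp add: blinfun.diff_right)
    qed
  next
    fix x assume "x \<in> (\<Inter>g\<in>G. {x. blinfun_apply g z \<le> blinfun_apply g x})"
    hence "\<forall>g::'a \<Rightarrow>\<^sub>L real. (\<forall>x. 0 \<le> x \<longrightarrow> 0 \<le> g x) \<longrightarrow> 0 \<le> g (x - z)"
      unfolding G_def by (auto simp: blinfun.diff_right)
    hence "0 \<le> x - z" using nonneg_iff_functionals by blast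
    thus "x \<in> {x. z \<le> x}" by simp
  qed
  moreover have "closed {x. blinfun_apply g z \<le> blinfun_apply g x}" for g :: "'a \<Rightarrow>\<^sub>L real"
    by (rule closed_Collect_le) (auto intro: continuous_intros linear_continuous_on blinfun.bounded_linear_right)
  ultimately show ?thesis by (metis (no_types, lifting) closed_INT)
qed

lemma pos_linear_bounded:
  fixes S :: "'a::banach_lattice \<Rightarrow> 'b::banach_lattice"
  assumes lin: "linear S" and pos: "\<And>x. 0 \<le> x \<Longrightarrow> 0 \<le> S x"
  shows "bounded_linear S"
proof -
  have mono: "S a \<le> S b" if "a \<le> b" for a b
    using pos[of "b - a"] that linear_diff[OF lin] by simp
  have absb: "norm (S x) \<le> norm (S (labs x))" for x
  proof (rule norm_le_pos_bound)
    have "S x \<le> S (labs x)" by (rule mono) (simp add: labs_def)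
    moreover have "- S x \<le> S (labs x)" using mono[of "-x" "labs x"] linear_neg[OF lin] by (simp add: labs_def)
    ultimately show "labs (S x) \<le> S (labs x)" unfolding labs_def by simp
  qed
  have "\<exists>K. \<forall>x. norm (S x) \<le> norm x * K"
  proof (rule ccontr)
    assume nb: "\<not> (\<exists>K. \<forall>x. norm (S x) \<le> norm x * K)"
    have "\<exists>u. 0 \<le> u \<and> norm u \<le> 1 \<and> 4 ^ n \<le> norm (S u)" for n :: nat
    proof -
      obtain x where x: "norm (S x) > norm x * 4 ^ n" using nb by (meson not_le)
      have xn: "x \<noteq> 0" using x linear_0[OF lin] by auto
      define u where "u = (1 / norm x) *\<^sub>R labs x"
      have "0 \<le> u" unfolding u_def using labs_nonneg[of x] by (simp add: scaleR_nonneg_nonneg)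
      moreover have "norm u \<le> 1" unfolding u_def using xn by (simp add: norm_labs)
      moreover have "4 ^ n \<le> norm (S u)"
      proof -
        have "norm (S u) = norm (S (labs x)) / norm x"
          unfolding u_def using linear_scale[OF lin] xn by simp
        moreover have "norm (S x) / norm x \<le> norm (S (labs x)) / norm x"
          using absb[of x] by (simp add: divide_right_mono)
        moreover have "4 ^ n < norm (S x) / norm x" using x xn by (simp add: field_simps)
        ultimately show ?thesis by simp
      qed
      ultimately show ?thesis by blast
    qed
    then obtain u where u: "\<And>n. 0 \<le> u n" "\<And>n. norm (u n) \<le> 1" "\<And>n. 4 ^ n \<le> norm (S (u n))"
      by metis
    define a where "a n = (1/2::real) ^ n *\<^sub>R u n" for n
    have a0: "0 \<le> a n" for n unfolding a_def using u(1) by (simp add: scaleR_nonneg_nonneg)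
    have na: "norm (a n) \<le> (1/2) ^ n" for n
      unfolding a_def using u(2)[of n] by (simp add: mult_left_le)
    have "summable (\<lambda>n. norm (a n))"
      by (rule summable_comparison_test'[of "\<lambda>n. (1/2::real)^n" 0]) (use na in \<open>auto intro: summable_geometric\<close>)
    hence sa: "summable a" by (rule summable_norm_cancel)
    define w where "w = suminf a"
    have lim: "(\<lambda>N. \<Sum>k<N. a k) \<longlonglongrightarrow> w" using sa unfolding w_def by (simp add: summable_LIMSEQ)
    have wge: "a n \<le> w" for n
    proof -
      have "eventually (\<lambda>N. (\<Sum>k<N. a k) \<in> {x. a n \<le> x}) sequentially"
      proof (rule eventually_sequentiallyI[of "Suc n"])
        fix N assume "Suc n \<le> N"
        hence "n \<in> {..<N}" by simp
        hence "(\<Sum>k<N. a k) = a n + (\<Sum>k\<in>{..<N} - {n}. a k)" by (simp add: sum.remove)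
        moreover have "0 \<le> (\<Sum>k\<in>{..<N} - {n}. a k)" by (rule sum_nonneg) (use a0 in auto)
        ultimately show "(\<Sum>k<N. a k) \<in> {x. a n \<le> x}" by simp
      qed
      from Lim_in_closed_set[OF closed_ge this _ lim] show ?thesis by simp
    qed
    have big: "2 ^ n \<le> norm (S w)" for n :: nat
    proof -
      have "norm (S (a n)) \<le> norm (S w)" using pos[OF a0] mono[OF wge] by (rule norm_mono_pos)
      moreover have "S (a n) = (1/2) ^ n *\<^sub>R S (u n)" unfolding a_def using linear_scale[OF lin] by simp
      moreover have "(2::real) ^ n \<le> (1/2) ^ n * norm (S (u n))"
      proof -
        have "(1/2::real) ^ n * 4 ^ n \<le> (1/2) ^ n * norm (S (u n))" using u(3)[of n] by (simp add: mult_left_mono)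
        moreover have "(1/2::real) ^ n * 4 ^ n = 2 ^ n" by (simp flip: power_mult_distrib)
        ultimately show ?thesis by simp
      qed
      ultimately show ?thesis by simp
    qed
    obtain n :: nat where "norm (S w) < 2 ^ n" using real_arch_pow[of 2 "norm (S w)"] by auto
    with big[of n] show False by simp
  qed
  then obtain K where K: "\<And>x. norm (S x) \<le> norm x * K" by blast
  show ?thesis
    by (rule bounded_linear_intro[OF linear_add[OF lin] linear_scale[OF lin] K])
qed

definition is_lub :: "'a::order set \<Rightarrow> 'a \<Rightarrow> bool" where
  "is_lub A s \<longleftrightarrow> (\<forall>a\<in>A. a \<le> s) \<and> (\<forall>c. (\<forall>a\<in>A. a \<le> c) \<longrightarrow> s \<le> c)"

definition lsup :: "'a::order set \<Rightarrow> 'a" where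
  "lsup A = (SOME s. is_lub A s)"

lemma lsup_eq: "is_lub A s \<Longrightarrow> lsup A = s"
  unfolding lsup_def
proof (rule some_equality)
  fix t assume "is_lub A s" "is_lub A t"
  thus "t = s" unfolding is_lub_def by (meson order.antisym)
qed

definition Qset :: "('a::banach_lattice \<Rightarrow>\<^sub>L 'b::banach_lattice) \<Rightarrow> 'a \<Rightarrow> 'b set" where
  "Qset T x = {T u - T (x - u) | u. 0 \<le> u \<and> u \<le> x}"

definition Mfun :: "('a::banach_lattice \<Rightarrow>\<^sub>L 'b::banach_lattice) \<Rightarrow> 'a \<Rightarrow> 'b" where
  "Mfun T x = lsup (Qset T x)"

lemma Qset_bdd:
  assumes ob: "order_bounded_op T" and x: "0 \<le> x"
  shows "\<exists>b. \<forall>q\<in>Qset T x. q \<le> b"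
proof -
  define S where "S = {y. - x \<le> y \<and> y \<le> x}"
  have "order_bounded_set S" unfolding order_bounded_set_def S_def by (intro exI[of _ "-x"] exI[of _ x]) auto
  hence "order_bounded_set (blinfun_apply T ` S)" using ob unfolding order_bounded_op_def by blast
  then obtain lo hi where hi: "blinfun_apply T ` S \<subseteq> {lo..hi}" unfolding order_bounded_set_def by blast
  have "q \<le> hi" if q: "q \<in> Qset T x" for q
  proof -
    obtain u where u: "0 \<le> u" "u \<le> x" "q = T u - T (x - u)" using q unfolding Qset_def by blast
    have "u - (x - u) \<in> S"
    proof -
      have "- x \<le> u - (x - u)" using u(1) by (simp add: algebra_simps)
      moreover have "u - (x - u) \<le> x" using add_mono[OF u(2) u(2)] by (simp add: algebra_simps)
      ultimately show ?thesis unfolding S_def by simp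
    qed
    hence "T (u - (x - u)) \<le> hi" using hi by auto
    thus ?thesis using u(3) by (simp add: blinfun.diff_right)
  qed
  thus ?thesis by blast
qed

lemma Mfun_lub:
  assumes refl: "reflexive TYPE('b)" and ob: "order_bounded_op (T :: 'a::banach_lattice \<Rightarrow>\<^sub>L 'b::banach_lattice)"
    and x: "0 \<le> x"
  shows "is_lub (Qset T x) (Mfun T x)"
proof -
  have ne: "Qset T x \<noteq> {}" unfolding Qset_def using x by auto
  obtain b where "\<forall>q\<in>Qset T x. q \<le> b" using Qset_bdd[OF ob x] by blast
  then obtain s where "is_lub (Qset T x) s" using reflexive_has_lub[OF refl ne] unfolding is_lub_def by blast
  thus ?thesis unfolding Mfun_def using lsup_eq by metis
qed

lemma Mfun_ge:
  assumes refl: "reflexive TYPE('b)" and ob: "order_bounded_op (T :: 'a::banach_lattice \<Rightarrow>\<^sub>L 'b::banach_lattice)"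
    and x: "0 \<le> x"
  shows "T x \<le> Mfun T x" "- T x \<le> Mfun T x"
proof -
  have L: "\<forall>q\<in>Qset T x. q \<le> Mfun T x" using Mfun_lub[OF refl ob x] unfolding is_lub_def by blast
  have "T x - T (x - x) \<in> Qset T x" unfolding Qset_def using x by blast
  thus "T x \<le> Mfun T x" using L by simp
  have "T 0 - T (x - 0) \<in> Qset T x" unfolding Qset_def using x by blast
  thus "- T x \<le> Mfun T x" using L by simp
qed

lemma Mfun_nonneg:
  assumes refl: "reflexive TYPE('b)" and ob: "order_bounded_op (T :: 'a::banach_lattice \<Rightarrow>\<^sub>L 'b::banach_lattice)"
    and x: "0 \<le> x"
  shows "0 \<le> Mfun T x"
proof -
  have "T x + - T x \<le> Mfun T x + Mfun T x" using Mfun_ge[OF refl ob x] by (rule add_mono)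
  thus ?thesis by simp
qed

lemma Mfun_add:
  assumes refl: "reflexive TYPE('b)" and ob: "order_bounded_op (T :: 'a::banach_lattice \<Rightarrow>\<^sub>L 'b::banach_lattice)"
    and x1: "0 \<le> x1" and x2: "0 \<le> x2"
  shows "Mfun T (x1 + x2) = Mfun T x1 + Mfun T x2"
proof -
  have x12: "0 \<le> x1 + x2" using x1 x2 by simp
  note L = Mfun_lub[OF refl ob x12] Mfun_lub[OF refl ob x1] Mfun_lub[OF refl ob x2]
  define s where "s = Mfun T (x1 + x2)"
  define s1 where "s1 = Mfun T x1"
  define s2 where "s2 = Mfun T x2"
  have split: "\<exists>q1\<in>Qset T x1. \<exists>q2\<in>Qset T x2. q = q1 + q2" if q: "q \<in> Qset T (x1 + x2)" for q
  proof -
    obtain u where u: "0 \<le> u" "u \<le> x1 + x2" "q = T u - T (x1 + x2 - u)" using q unfolding Qset_def by blast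
    define u1 where "u1 = inf u x1"
    define u2 where "u2 = u - u1"
    have u1: "0 \<le> u1" "u1 \<le> x1" unfolding u1_def using u(1) x1 by auto
    have u2a: "0 \<le> u2" unfolding u2_def u1_def by (simp only: diff_ge_0_iff_ge inf.cobounded1)
    have "u \<le> x2 + inf u x1"
    proof -
      have "u \<le> x2 + u" using x2 by simp
      moreover have "u \<le> x2 + x1" using u(2) by (simp add: add.commute)
      ultimately have "u \<le> inf (x2 + u) (x2 + x1)" by simp
      thus ?thesis by (simp add: add_inf_distrib_left)
    qed
    hence u2b: "u2 \<le> x2" unfolding u2_def u1_def by (simp only: diff_le_eq)
    have "q = (T u1 - T (x1 - u1)) + (T u2 - T (x2 - u2))"
    proof -
      have e1: "u = u1 + u2" unfolding u2_def by simp
      have e2: "x1 + x2 - u = (x1 - u1) + (x2 - u2)" unfolding u2_def by (simp add: algebra_simps)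
      have "T (x1 + x2 - u) = T (x1 - u1) + T (x2 - u2)" unfolding e2 by (rule blinfun.add_right)
      moreover have "T u = T u1 + T u2" unfolding e1 by (rule blinfun.add_right)
      ultimately show ?thesis using u(3) by (simp add: algebra_simps)
    qed
    moreover have "T u1 - T (x1 - u1) \<in> Qset T x1" unfolding Qset_def using u1 by blast
    moreover have "T u2 - T (x2 - u2) \<in> Qset T x2" unfolding Qset_def using u2a u2b by blast
    ultimately show ?thesis by blast
  qed
  have join: "q1 + q2 \<in> Qset T (x1 + x2)" if q1: "q1 \<in> Qset T x1" and q2: "q2 \<in> Qset T x2" for q1 q2
  proof -
    obtain u1 where u1: "0 \<le> u1" "u1 \<le> x1" "q1 = T u1 - T (x1 - u1)" using q1 unfolding Qset_def by blast
    obtain u2 where u2: "0 \<le> u2" "u2 \<le> x2" "q2 = T u2 - T (x2 - u2)" using q2 unfolding Qset_def by blast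
    have "0 \<le> u1 + u2" using u1(1) u2(1) by simp
    moreover have "u1 + u2 \<le> x1 + x2" using u1(2) u2(2) by (rule add_mono)
    moreover have "q1 + q2 = T (u1 + u2) - T (x1 + x2 - (u1 + u2))"
    proof -
      have e: "x1 + x2 - (u1 + u2) = (x1 - u1) + (x2 - u2)" by (simp add: algebra_simps)
      have "T (x1 + x2 - (u1 + u2)) = T (x1 - u1) + T (x2 - u2)" unfolding e by (rule blinfun.add_right)
      moreover have "T (u1 + u2) = T u1 + T u2" by (rule blinfun.add_right)
      ultimately show ?thesis unfolding u1(3) u2(3) by (simp add: algebra_simps)
    qed
    ultimately show ?thesis unfolding Qset_def by blast
  qed
  have "s \<le> s1 + s2"
  proof -
    have "\<forall>q\<in>Qset T (x1 + x2). q \<le> s1 + s2"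
    proof
      fix q assume "q \<in> Qset T (x1 + x2)"
      then obtain q1 q2 where "q1 \<in> Qset T x1" "q2 \<in> Qset T x2" "q = q1 + q2" using split by blast
      moreover have "q1 \<le> s1" using L(2) \<open>q1 \<in> Qset T x1\<close> unfolding is_lub_def s1_def by blast
      moreover have "q2 \<le> s2" using L(3) \<open>q2 \<in> Qset T x2\<close> unfolding is_lub_def s2_def by blast
      ultimately show "q \<le> s1 + s2" by (simp add: add_mono)
    qed
    thus ?thesis using L(1) unfolding is_lub_def s_def by blast
  qed
  moreover have "s1 + s2 \<le> s"
  proof -
    have A: "\<forall>q1\<in>Qset T x1. \<forall>q2\<in>Qset T x2. q1 + q2 \<le> s"
      using join L(1) unfolding is_lub_def s_def by blast
    have "\<forall>q2\<in>Qset T x2. s1 \<le> s - q2"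
    proof
      fix q2 assume q2: "q2 \<in> Qset T x2"
      have "\<forall>q1\<in>Qset T x1. q1 \<le> s - q2" using A q2 by (simp add: le_diff_eq)
      thus "s1 \<le> s - q2" using L(2) unfolding is_lub_def s1_def by blast
    qed
    hence "\<forall>q2\<in>Qset T x2. q2 \<le> s - s1" by (simp add: le_diff_eq add.commute)
    hence "s2 \<le> s - s1" using L(3) unfolding is_lub_def s2_def by blast
    thus ?thesis by (simp add: le_diff_eq add.commute)
  qed
  ultimately show ?thesis unfolding s_def s1_def s2_def by (rule antisym)
qed

lemma Mfun_scale:
  assumes refl: "reflexive TYPE('b)" and ob: "order_bounded_op (T :: 'a::banach_lattice \<Rightarrow>\<^sub>L 'b::banach_lattice)"
    and x: "0 \<le> x" and c: "0 < c"
  shows "Mfun T (c *\<^sub>R x) = c *\<^sub>R Mfun T x"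
proof -
  have cx: "0 \<le> c *\<^sub>R x" using x c by (simp add: scaleR_nonneg_nonneg)
  have Qs: "Qset T (c *\<^sub>R x) = (\<lambda>q. c *\<^sub>R q) ` Qset T x"
  proof (intro set_eqI iffI)
    fix q assume "q \<in> Qset T (c *\<^sub>R x)"
    then obtain u where u: "0 \<le> u" "u \<le> c *\<^sub>R x" "q = T u - T (c *\<^sub>R x - u)" unfolding Qset_def by blast
    define v where "v = (1/c) *\<^sub>R u"
    have uv: "u = c *\<^sub>R v" unfolding v_def using c by simp
    have "0 \<le> v" unfolding v_def using u(1) c by (simp add: scaleR_nonneg_nonneg)
    moreover have "v \<le> x"
    proof -
      have "(1/c) *\<^sub>R u \<le> (1/c) *\<^sub>R (c *\<^sub>R x)" using u(2) c by (intro scaleR_left_mono) auto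
      thus ?thesis unfolding v_def using c by simp
    qed
    moreover have "q = c *\<^sub>R (T v - T (x - v))"
      using u(3) uv by (simp add: blinfun.scaleR_right blinfun.diff_right scaleR_diff_right)
    ultimately show "q \<in> (\<lambda>q. c *\<^sub>R q) ` Qset T x" unfolding Qset_def by blast
  next
    fix q assume "q \<in> (\<lambda>q. c *\<^sub>R q) ` Qset T x"
    then obtain v where v: "0 \<le> v" "v \<le> x" "q = c *\<^sub>R (T v - T (x - v))" unfolding Qset_def by blast
    have "0 \<le> c *\<^sub>R v" using v(1) c by (simp add: scaleR_nonneg_nonneg)
    moreover have "c *\<^sub>R v \<le> c *\<^sub>R x" using v(2) c by (intro scaleR_left_mono) auto
    moreover have "q = T (c *\<^sub>R v) - T (c *\<^sub>R x - c *\<^sub>R v)"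
      using v(3) by (simp add: blinfun.scaleR_right blinfun.diff_right scaleR_diff_right)
    ultimately show "q \<in> Qset T (c *\<^sub>R x)" unfolding Qset_def by blast
  qed
  have "is_lub (Qset T (c *\<^sub>R x)) (c *\<^sub>R Mfun T x)"
  proof -
    note L = Mfun_lub[OF refl ob x]
    have "\<forall>q\<in>Qset T x. c *\<^sub>R q \<le> c *\<^sub>R Mfun T x"
      using L c unfolding is_lub_def by (auto intro: scaleR_left_mono)
    moreover have "c *\<^sub>R Mfun T x \<le> d" if d: "\<forall>q\<in>Qset T x. c *\<^sub>R q \<le> d" for d
    proof -
      have "\<forall>q\<in>Qset T x. q \<le> (1/c) *\<^sub>R d"
      proof
        fix q assume "q \<in> Qset T x"
        hence "(1/c) *\<^sub>R (c *\<^sub>R q) \<le> (1/c) *\<^sub>R d" using d c by (intro scaleR_left_mono) auto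
        thus "q \<le> (1/c) *\<^sub>R d" using c by simp
      qed
      hence "Mfun T x \<le> (1/c) *\<^sub>R d" using L unfolding is_lub_def by blast
      hence "c *\<^sub>R Mfun T x \<le> c *\<^sub>R ((1/c) *\<^sub>R d)" using c by (intro scaleR_left_mono) auto
      thus ?thesis using c by simp
    qed
    ultimately show ?thesis unfolding is_lub_def Qs by blast
  qed
  thus ?thesis using Mfun_lub[OF refl ob cx] lsup_eq unfolding Mfun_def by metis
qed

lemma Mfun_zero:
  assumes refl: "reflexive TYPE('b)" and ob: "order_bounded_op (T :: 'a::banach_lattice \<Rightarrow>\<^sub>L 'b::banach_lattice)"
  shows "Mfun T 0 = 0"
  using Mfun_add[OF refl ob order.refl order.refl] by simp

definition Sfun :: "('a::banach_lattice \<Rightarrow>\<^sub>L 'b::banach_lattice) \<Rightarrow> 'a \<Rightarrow> 'b" where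
  "Sfun T x = Mfun T (pprt x) - Mfun T (- nprt x)"

lemma Sfun_decomp:
  assumes refl: "reflexive TYPE('b)" and ob: "order_bounded_op (T :: 'a::banach_lattice \<Rightarrow>\<^sub>L 'b::banach_lattice)"
    and a: "0 \<le> a" and b: "0 \<le> b" and x: "x = a - b"
  shows "Sfun T x = Mfun T a - Mfun T b"
proof -
  have n: "0 \<le> - nprt x" by simp
  have p: "0 \<le> pprt x" by simp
  have "a - b = pprt x + nprt x" using x prts[of x] by simp
  hence e: "a + (- nprt x) = pprt x + b" by (simp add: algebra_simps)
  have "Mfun T a + Mfun T (- nprt x) = Mfun T (pprt x) + Mfun T b"
    using Mfun_add[OF refl ob a n] Mfun_add[OF refl ob p b] e by simp
  thus ?thesis unfolding Sfun_def by (simp add: algebra_simps)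
qed

lemma Sfun_pos:
  assumes refl: "reflexive TYPE('b)" and ob: "order_bounded_op (T :: 'a::banach_lattice \<Rightarrow>\<^sub>L 'b::banach_lattice)"
    and x: "0 \<le> x"
  shows "Sfun T x = Mfun T x"
  using Sfun_decomp[OF refl ob x order.refl, of x] Mfun_zero[OF refl ob] by simp

lemma Sfun_linear:
  assumes refl: "reflexive TYPE('b)" and ob: "order_bounded_op (T :: 'a::banach_lattice \<Rightarrow>\<^sub>L 'b::banach_lattice)"
  shows "linear (Sfun T)"
proof (rule linearI)
  fix x y :: 'a
  define px where "px = pprt x" define nx where "nx = - nprt x"
  define py where "py = pprt y" define ny where "ny = - nprt y"
  have nn: "0 \<le> px" "0 \<le> nx" "0 \<le> py" "0 \<le> ny" unfolding px_def nx_def py_def ny_def by simp_all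
  have ex: "x = px - nx" and ey: "y = py - ny"
    unfolding px_def nx_def py_def ny_def using prts[of x] prts[of y] by simp_all
  have "Sfun T (x + y) = Mfun T (px + py) - Mfun T (nx + ny)"
    by (rule Sfun_decomp[OF refl ob]) (use nn ex ey in \<open>simp_all add: algebra_simps\<close>)
  also have "\<dots> = (Mfun T px - Mfun T nx) + (Mfun T py - Mfun T ny)"
    using Mfun_add[OF refl ob nn(1,3)] Mfun_add[OF refl ob nn(2,4)] by (simp add: algebra_simps)
  also have "\<dots> = Sfun T x + Sfun T y"
    using Sfun_decomp[OF refl ob nn(1,2) ex] Sfun_decomp[OF refl ob nn(3,4) ey] by simp
  finally show "Sfun T (x + y) = Sfun T x + Sfun T y" .
next
  fix c :: real and x :: 'a
  define px where "px = pprt x" define nx where "nx = - nprt x"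
  have nn: "0 \<le> px" "0 \<le> nx" unfolding px_def nx_def by simp_all
  have ex: "x = px - nx" unfolding px_def nx_def using prts[of x] by simp
  have Sx: "Sfun T x = Mfun T px - Mfun T nx" by (rule Sfun_decomp[OF refl ob nn ex])
  show "Sfun T (c *\<^sub>R x) = c *\<^sub>R Sfun T x"
  proof (cases c "0::real" rule: linorder_cases)
    case greater
    have "Sfun T (c *\<^sub>R x) = Mfun T (c *\<^sub>R px) - Mfun T (c *\<^sub>R nx)"
      by (rule Sfun_decomp[OF refl ob]) (use nn greater ex in \<open>simp_all add: scaleR_nonneg_nonneg scaleR_diff_right\<close>)
    thus ?thesis using Sx Mfun_scale[OF refl ob nn(1) greater] Mfun_scale[OF refl ob nn(2) greater]
      by (simp add: scaleR_diff_right)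
  next
    case less
    have mc: "0 < - c" using less by simp
    have "Sfun T (c *\<^sub>R x) = Mfun T ((- c) *\<^sub>R nx) - Mfun T ((- c) *\<^sub>R px)"
      by (rule Sfun_decomp[OF refl ob]) (use nn mc less ex in \<open>simp_all add: scaleR_nonneg_nonneg scaleR_diff_right scaleR_nonpos_nonneg\<close>)
    thus ?thesis using Sx Mfun_scale[OF refl ob nn(1) mc] Mfun_scale[OF refl ob nn(2) mc]
      by (simp add: scaleR_diff_right)
  next
    case equal
    thus ?thesis using Sfun_pos[OF refl ob order.refl] Mfun_zero[OF refl ob] by simp
  qed
qed

theorem theorem2p13:
  fixes T :: "'e::banach_lattice \<Rightarrow>\<^sub>L 'f::banach_lattice"
  assumes "AL_space TYPE('e)"
    and "reflexive TYPE('f)"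
    and "order_bounded_op T"
    and "seq_uaw_compact_op T"
  shows "\<exists>S. is_modulus T S \<and> weakly_compact_op S"
proof -
  have refl: "reflexive TYPE('f)" and ob: "order_bounded_op T" using assms by auto
  have bl: "bounded_linear (Sfun T)"
    by (rule pos_linear_bounded[OF Sfun_linear[OF refl ob]])
       (simp add: Sfun_pos[OF refl ob] Mfun_nonneg[OF refl ob])
  define S where "S = Blinfun (Sfun T)"
  have Sapp: "blinfun_apply S x = Sfun T x" for x
    using bl by (simp add: S_def bounded_linear_Blinfun_apply)
  have Spos: "0 \<le> x \<Longrightarrow> blinfun_apply S x = Mfun T x" for x
    using Sapp Sfun_pos[OF refl ob] by simp
  have Smono: "blinfun_apply S a \<le> blinfun_apply S b" if "a \<le> b" for a b
  proof -
    have "0 \<le> b - a" using that by simp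
    hence "0 \<le> blinfun_apply S (b - a)" using Spos Mfun_nonneg[OF refl ob] by simp
    thus ?thesis by (simp add: blinfun.diff_right)
  qed
  have obS: "order_bounded_op S" unfolding order_bounded_op_def
  proof (intro allI impI)
    fix A :: "'e set" assume "order_bounded_set A"
    then obtain a b where ab: "A \<subseteq> {a..b}" unfolding order_bounded_set_def by blast
    have "blinfun_apply S ` A \<subseteq> {blinfun_apply S a..blinfun_apply S b}"
      using ab Smono by auto
    thus "order_bounded_set (blinfun_apply S ` A)" unfolding order_bounded_set_def by blast
  qed
  have le1: "op_le T S" unfolding op_le_def using Spos Mfun_ge(1)[OF refl ob] by simp
  have le2: "op_le (- T) S" unfolding op_le_def using Spos Mfun_ge(2)[OF refl ob] by (simp add: uminus_blinfun.rep_eq)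
  have least: "op_le S R" if R1: "op_le T R" and R2: "op_le (- T) R" for R
    unfolding op_le_def
  proof (intro allI impI)
    fix x :: 'e assume x: "0 \<le> x"
    have "\<forall>q\<in>Qset T x. q \<le> blinfun_apply R x"
    proof
      fix q assume "q \<in> Qset T x"
      then obtain u where u: "0 \<le> u" "u \<le> x" "q = T u - T (x - u)" unfolding Qset_def by blast
      have "T u \<le> R u" using R1 u(1) unfolding op_le_def by blast
      moreover have "- T (x - u) \<le> R (x - u)" using R2 u(2) unfolding op_le_def by (simp add: uminus_blinfun.rep_eq)
      ultimately have "T u + - T (x - u) \<le> R u + R (x - u)" by (rule add_mono)
      moreover have "R u + R (x - u) = R x" by (simp add: blinfun.diff_right)
      ultimately show "q \<le> blinfun_apply R x" using u(3) by simp
    qed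
    hence "Mfun T x \<le> blinfun_apply R x" using Mfun_lub[OF refl ob x] unfolding is_lub_def by blast
    thus "blinfun_apply S x \<le> blinfun_apply R x" using Spos[OF x] by simp
  qed
  have mod: "is_modulus T S" unfolding is_modulus_def using obS le1 le2 least by blast
  have wc: "weakly_compact_op S" unfolding weakly_compact_op_def
  proof -
    define r where "r = norm S"
    have r0: "0 \<le> r" unfolding r_def by simp
    have sub: "blinfun_apply S ` cball 0 1 \<subseteq> Kset r"
    proof
      fix y assume "y \<in> blinfun_apply S ` cball 0 1"
      then obtain x where x: "norm x \<le> 1" "y = S x" by auto
      have "norm (S x) \<le> norm S * norm x" by (rule norm_blinfun)
      also have "\<dots> \<le> norm S * 1" using x(1) by (intro mult_left_mono) auto
      finally show "y \<in> Kset r" unfolding r_def using x(2) by (intro norm_le_Kset) simp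
    qed
    have "weak_top closure_of (blinfun_apply S ` cball 0 1) \<subseteq> Kset r"
      by (rule closure_of_minimal[OF sub closedin_Kset])
    thus "compactin weak_top (weak_top closure_of (blinfun_apply S ` cball 0 1))"
      by (rule closed_compactin[OF compactin_Kset[OF refl r0]]) simp
  qed
  show ?thesis using mod wc by blast
qed

end
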